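(* For every base $\mathscr{B}$, finite multisets of atoms $P,S$ and atom $q$: $P,S\vdash_{\mathscr{B}}q$ if and only if $P\Vdash^{S}_{\mathscr{B}}q$.
   Context: Fix a countably infinite set $\mathbb{A}$ of atoms. IMLL formulas: $\varphi::= p\in\mathbb{A}\mid\varphi\otimes\varphi\mid \mathrm{I}\mid\varphi\multimap\varphi$. Collections are finite multisets; "$,$" denotes multiset union. An atomic rule is $(P_1\triangleright p_1,\dots,P_n\triangleright p_n)\Rightarrow p$ ($n\ge0$, $P_i$ finite multisets of atoms); a base is a set of atomic rules. Derivability $\vdash_{\mathscr{B}}$ is the least relation with (Ref) $[p]\vdash_{\mathscr{B}}p$; (App) if $(P_1\triangleright p_1,\dots,P_n\triangleright p_n)\Rightarrow p\in\mathscr{B}$ and $S_i,P_i\vdash_{\mathscr{B}}p_i$ for all $i$, then $S_1,\dots,S_n\vdash_{\mathscr{B}}p$. Support: (At) $\Vdash^{P}_{\mathscr{B}}p$ iff $P\vdash_{\mathscr{B}}p$; ($\otimes$) $\Vdash^{P}_{\mathscr{B}}\varphi\otimes\psi$ iff for every $\mathscr{X}\supseteq\mathscr{B}$, multiset of atoms $U$, atom $p$, if $\varphi,\psi\Vdash^{U}_{\mathscr{X}}p$ then $\Vdash^{P,U}_{\mathscr{X}}p$; ($\mathrm{I}$) $\Vdash^{P}_{\mathscr{B}}\mathrm{I}$ iff for every $\mathscr{X}\supseteq\mathscr{B}$, $U$, $p$, if $\Vdash^{U}_{\mathscr{X}}p$ then $\Vdash^{P,U}_{\mathscr{X}}p$;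 ($\multimap$) $\Vdash^{P}_{\mathscr{B}}\varphi\multimap\psi$ iff $\varphi\Vdash^{P}_{\mathscr{B}}\psi$; (comma) for nonempty $\Gamma,\Delta$, $\Vdash^{P}_{\mathscr{B}}\Gamma,\Delta$ iff $P=U,V$ for some $U,V$ with $\Vdash^{U}_{\mathscr{B}}\Gamma$, $\Vdash^{V}_{\mathscr{B}}\Delta$ (singleton $[\varphi]$ supported iff $\varphi$ is); (Inf) for nonempty $\Gamma$, $\Gamma\Vdash^{P}_{\mathscr{B}}\varphi$ iff for every $\mathscr{X}\supseteq\mathscr{B}$ and $U$, if $\Vdash^{U}_{\mathscr{X}}\Gamma$ then $\Vdash^{P,U}_{\mathscr{X}}\varphi$; for empty $\Gamma$ it means $\Vdash^{P}_{\mathscr{B}}\varphi$. Here a multiset of atoms $P$ on the left of $\Vdash$ is viewed as a multiset of atomic formulas. *)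

theory Defs
  imports Main "HOL-Library.Multiset"
begin

text \<open>Atoms: a countably infinite set, represented by nat.\<close>
type_synonym atom = nat

datatype formula =
    Atom atom
  | Tensor formula formula
  | One
  | Lolli formula formula

text \<open>An atomic rule (P1|>p1, ..., Pn|>pn) => p: a list of premises (Pi, pi) and a conclusion p.\<close>
type_synonym rule = "(atom multiset \<times> atom) list \<times> atom"
type_synonym base = "rule set"

inductive derivable :: "base \<Rightarrow> atom multiset \<Rightarrow> atom \<Rightarrow> bool" for B :: base where
  Ref: "derivable B {#p#} p"
| App: "\<lbrakk> (prems, p) \<in> B; length Ss = length prems;
          \<forall>i < length prems. derivable B (Ss ! i + fst (prems ! i)) (snd (prems ! i)) \<rbrakk>
        \<Longrightarrow> derivable B (sum_list Ss) p"

text \<open>In the tensor clause, \<open>\<phi>, \<psi> \<Vdash>^U_X p\<close> is unfolded via (Inf) and the comma rule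
  for the two-element multiset [\<phi>,\<psi>].\<close>
fun supp :: "base \<Rightarrow> atom multiset \<Rightarrow> formula \<Rightarrow> bool" where
  "supp B P (Atom p) = derivable B P p"
| "supp B P (Tensor \<phi> \<psi>) =
     (\<forall>X U p. B \<subseteq> X \<longrightarrow>
        (\<forall>Y V. X \<subseteq> Y \<longrightarrow>
            (\<exists>V1 V2. V = V1 + V2 \<and> supp Y V1 \<phi> \<and> supp Y V2 \<psi>) \<longrightarrow> derivable Y (U + V) p)
        \<longrightarrow> derivable X (P + U) p)"
| "supp B P One = (\<forall>X U p. B \<subseteq> X \<longrightarrow> derivable X U p \<longrightarrow> derivable X (P + U) p)"
| "supp B P (Lolli \<phi> \<psi>) = (\<forall>X U. B \<subseteq> X \<longrightarrow> supp X U \<phi> \<longrightarrow> supp X (P + U) \<psi>)"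

inductive supp_ms :: "base \<Rightarrow> atom multiset \<Rightarrow> formula multiset \<Rightarrow> bool" where
  single: "supp B P \<phi> \<Longrightarrow> supp_ms B P {#\<phi>#}"
| comma: "\<lbrakk> \<Gamma> \<noteq> {#}; \<Delta> \<noteq> {#}; supp_ms B U \<Gamma>; supp_ms B V \<Delta> \<rbrakk>
          \<Longrightarrow> supp_ms B (U + V) (\<Gamma> + \<Delta>)"

definition supp_inf :: "base \<Rightarrow> atom multiset \<Rightarrow> formula multiset \<Rightarrow> formula \<Rightarrow> bool" where
  "supp_inf B P \<Gamma> \<phi> =
     (if \<Gamma> = {#} then supp B P \<phi>
      else (\<forall>X U. B \<subseteq> X \<longrightarrow> supp_ms X U \<Gamma> \<longrightarrow> supp X (P + U) \<phi>))"

end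

theory Submission
  imports Defs
begin

lemma deriv_mono: "derivable B P p \<Longrightarrow> B \<subseteq> X \<Longrightarrow> derivable X P p"
proof (induction rule: derivable.induct)
  case (Ref p) then show ?case by (simp add: derivable.Ref)
next
  case (App prems p Ss) then show ?case by (auto intro!: derivable.App)
qed

lemma in_sum_list: "(p::'a) \<in># sum_list Ss \<Longrightarrow> \<exists>i<length Ss. p \<in># Ss ! i"
proof (induction Ss)
  case Nil then show ?case by simp
next
  case (Cons a Ss)
  show ?case
  proof (cases "p \<in># a")
    case True then show ?thesis by force
  next
    case False
    then have "p \<in># sum_list Ss" using Cons.prems by simp
    then obtain i where "i < length Ss" "p \<in># Ss ! i" using Cons.IH by blast
    then show ?thesis by (intro exI[of _ "Suc i"]) auto
  qed
qed

lemma sum_list_split: "i < length (xs::'a::comm_monoid_add list) \<Longrightarrow>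
  sum_list xs = sum_list (take i xs) + xs ! i + sum_list (drop (Suc i) xs)"
proof -
  assume "i < length xs"
  then have "xs = take i xs @ xs ! i # drop (Suc i) xs" by (rule id_take_nth_drop)
  then have "sum_list xs = sum_list (take i xs @ xs ! i # drop (Suc i) xs)" by simp
  also have "\<dots> = sum_list (take i xs) + xs ! i + sum_list (drop (Suc i) xs)" by (simp add: add.assoc)
  finally show ?thesis .
qed

lemma cut1: "derivable B N q \<Longrightarrow> N = M + {#p#} \<Longrightarrow> derivable B U p \<Longrightarrow> derivable B (M + U) q"
proof (induction arbitrary: M rule: derivable.induct)
  case (Ref r)
  then have "M = {#} \<and> r = p"
    by (simp add: single_eq_add_mset)
  then have "M = {#}" "r = p" by auto
  then show ?case using Ref by simp
next
  case (App prems r Ss)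
  have "p \<in># sum_list Ss" using App.prems(1) by simp
  from in_sum_list[OF this] obtain i where i: "i < length Ss" "p \<in># Ss ! i" by blast
  define Mi where "Mi = Ss ! i - {#p#}"
  have Si: "Ss ! i = Mi + {#p#}" using i(2) Mi_def by simp
  have ip: "i < length prems" using i App.hyps(2) by simp
  from App.IH ip have ih: "\<forall>x. Ss ! i + fst (prems ! i) = x + {#p#} \<longrightarrow>
           derivable B U p \<longrightarrow> derivable B (x + U) (snd (prems ! i))" by blast
  then have "Ss ! i + fst (prems ! i) = (Mi + fst (prems ! i)) + {#p#} \<longrightarrow>
           derivable B U p \<longrightarrow> derivable B ((Mi + fst (prems ! i)) + U) (snd (prems ! i))" by (rule spec)
  moreover have "Ss ! i + fst (prems ! i) = (Mi + fst (prems ! i)) + {#p#}" using Si by (simp add: ac_simps)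
  ultimately have d: "derivable B (Mi + fst (prems ! i) + U) (snd (prems ! i))" using App.prems(2) by blast
  define Ts where "Ts = Ss[i := Mi + U]"
  have len: "length Ts = length prems" using Ts_def App.hyps(2) by simp
  have all: "\<forall>j<length prems. derivable B (Ts ! j + fst (prems ! j)) (snd (prems ! j))"
  proof (intro allI impI)
    fix j assume j: "j < length prems"
    show "derivable B (Ts ! j + fst (prems ! j)) (snd (prems ! j))"
    proof (cases "j = i")
      case True then show ?thesis using d i Ts_def by (simp add: ac_simps)
    next
      case False
      from App.IH j have "derivable B (Ss ! j + fst (prems ! j)) (snd (prems ! j))" by blast
      then show ?thesis using False Ts_def by simp
    qed
  qed
  have "sum_list Ss = sum_list (take i Ss) + (Mi + {#p#}) + sum_list (drop (Suc i) Ss)"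
    using sum_list_split[OF i(1)] Si by simp
  moreover have "sum_list Ts = sum_list (take i Ss) + (Mi + U) + sum_list (drop (Suc i) Ss)"
    using sum_list_split[of i Ts] i Ts_def by simp
  ultimately have "sum_list Ts = M + U" using App.prems(1)
    by (simp add: union_assoc[symmetric])
  then show ?case using derivable.App[OF App.hyps(1) len all] by simp
qed

lemma cut_ms: "supp_ms X U \<Gamma> \<Longrightarrow> \<Gamma> = image_mset Atom P \<Longrightarrow> derivable X (M + P) q \<Longrightarrow> derivable X (M + U) q"
proof (induction arbitrary: M P rule: supp_ms.induct)
  case (single B U \<phi>)
  from single.prems(1) obtain p where "P = {#p#}" "\<phi> = Atom p"
    by (cases P) (auto simp: add_mset_eq_single)
  then show ?case using single cut1 by auto
next
  case (comma \<Gamma> \<Delta> B U V)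
  from comma.prems(1) obtain P1 P2 where P: "P = P1 + P2" "\<Gamma> = image_mset Atom P1" "\<Delta> = image_mset Atom P2"
    using image_mset_eq_plusD by metis
  have "derivable B ((M + P1) + P2) q" using comma.prems(2) P by (simp add: ac_simps)
  then have "derivable B ((M + P1) + V) q" using comma.IH(2) P by blast
  then have "derivable B ((M + V) + P1) q" by (simp add: ac_simps)
  then have "derivable B ((M + V) + U) q" using comma.IH(1) P by blast
  then show ?case by (simp add: ac_simps)
qed

lemma refl_ms: "P \<noteq> {#} \<Longrightarrow> supp_ms B P (image_mset Atom P)"
proof (induction P)
  case empty then show ?case by simp
next
  case (add x P)
  have s: "supp_ms B {#x#} {#Atom x#}" by (rule supp_ms.single) (simp add: derivable.Ref)
  show ?case
  proof (cases "P = {#}")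
    case True then show ?thesis using s by simp
  next
    case False
    have "supp_ms B ({#x#} + P) ({#Atom x#} + image_mset Atom P)"
      by (rule supp_ms.comma) (use False add.IH s in auto)
    then show ?thesis by simp
  qed
qed

theorem mainTheorem8:
  fixes B :: base and P S :: "atom multiset" and q :: atom
  shows "derivable B (P + S) q \<longleftrightarrow> supp_inf B S (image_mset Atom P) (Atom q)"
proof (cases "P = {#}")
  case True then show ?thesis by (simp add: supp_inf_def)
next
  case False
  show ?thesis
  proof
    assume d: "derivable B (P + S) q"
    show "supp_inf B S (image_mset Atom P) (Atom q)"
      unfolding supp_inf_def using False
    proof (simp, intro allI impI)
      fix X U assume "B \<subseteq> X" "supp_ms X U (image_mset Atom P)"
      moreover have "derivable X (S + P) q" using deriv_mono[OF d] \<open>B \<subseteq> X\<close> by (simp add: ac_simps)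
      ultimately show "derivable X (S + U) q" using cut_ms by blast
    qed
  next
    assume "supp_inf B S (image_mset Atom P) (Atom q)"
    then have "derivable B (S + P) q" using False refl_ms[OF False, of B]
      unfolding supp_inf_def by simp
    then show "derivable B (P + S) q" by (simp add: ac_simps)
  qed
qed

end
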